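(* Let $t\ge0$, $R>1$, let $h$ be a minimizer of $E$ (defined in the context) with $h(1)=h(R)=1$, and let $\alpha,\beta,\gamma\in\mathbb R$. For $v\in H^1_0(1,R)$ define \[ \phi[v]=\int_1^R\left\{\alpha(v')^2+\frac{\beta}{r^2}v^2+\alpha\left(f(h)+\gamma\right)v^2\right\}r^2\,dr, \] where $f(h)=\frac t2(h^2-1)+\frac{3h_+}{2}(h^2-h)$. Then \[ \phi[v]=\int_1^R\left\{\alpha\left(\left(\frac vh\right)'\right)^2h^2+\frac{\beta-6\alpha}{r^2}v^2+\alpha\gamma v^2\right\}r^2\,dr. \]
   Context: $h_+=\frac{3+\sqrt{9+8t}}{4}$; $E[h]=\int_1^R\{\frac12(h')^2+\frac3{r^2}h^2+\frac t8(1-h^2)^2+\frac{h_+}{8}(1+3h^4-4h^3)\}r^2dr$ over $h\in H^1(1,R)$. $H^1_0(1,R)=\{w\in L^2((1,R);dr): w'\in L^2((1,R);r^2dr),\ w(1)=w(R)=0\}$. *)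

theory Defs
  imports "HOL-Analysis.Analysis"
begin

text \<open>A function u
  together with (a representative of) its weak derivative u' is in H^1(a,b) iff
  u' is square integrable on [a,b] and u is the absolutely continuous primitive
  of u'.  On a bounded interval 1 < r < R the weight r^2 is bounded above and
  below, so the weighted space of the paper coincides with this one.\<close>
definition H1 :: "real \<Rightarrow> real \<Rightarrow> (real \<Rightarrow> real) \<Rightarrow> (real \<Rightarrow> real) \<Rightarrow> bool" where
  "H1 a b u u' \<longleftrightarrow>
     set_integrable lborel {a..b} u' \<and>
     set_integrable lborel {a..b} (\<lambda>s. (u' s)\<^sup>2) \<and>
     (\<forall>x\<in>{a..b}. u x = u a + (LBINT s=a..x. u' s))"

definition H10 :: "real \<Rightarrow> (real \<Rightarrow> real) \<Rightarrow> (real \<Rightarrow> real) \<Rightarrow> bool" where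
  "H10 R w w' \<longleftrightarrow> H1 1 R w w' \<and> w 1 = 0 \<and> w R = 0"

definition hplus :: "real \<Rightarrow> real" where
  "hplus t = (3 + sqrt (9 + 8 * t)) / 4"

definition energy :: "real \<Rightarrow> real \<Rightarrow> (real \<Rightarrow> real) \<Rightarrow> (real \<Rightarrow> real) \<Rightarrow> real" where
  "energy t R h h' = (LBINT r=1..R.
      ((1/2) * (h' r)\<^sup>2 + 3 / r\<^sup>2 * (h r)\<^sup>2 + t / 8 * (1 - (h r)\<^sup>2)\<^sup>2
       + hplus t / 8 * (1 + 3 * (h r)^4 - 4 * (h r)^3)) * r\<^sup>2)"

definition fh :: "real \<Rightarrow> real \<Rightarrow> real" where
  "fh t y = t / 2 * (y\<^sup>2 - 1) + 3 * hplus t / 2 * (y\<^sup>2 - y)"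

definition phi :: "real \<Rightarrow> real \<Rightarrow> (real \<Rightarrow> real) \<Rightarrow> real \<Rightarrow> real \<Rightarrow> real
    \<Rightarrow> (real \<Rightarrow> real) \<Rightarrow> (real \<Rightarrow> real) \<Rightarrow> real" where
  "phi t R h \<alpha> \<beta> \<gamma> v v' = (LBINT r=1..R.
      (\<alpha> * (v' r)\<^sup>2 + \<beta> / r\<^sup>2 * (v r)\<^sup>2 + \<alpha> * (fh t (h r) + \<gamma>) * (v r)\<^sup>2) * r\<^sup>2)"

end

theory Submission
  imports Defs
begin


lemma fubini_tri:
  fixes F G :: "real \<Rightarrow> real"
  assumes F[measurable]: "integrable lborel F" and G[measurable]: "integrable lborel G"
  shows "(\<integral>s. F s * (\<integral>\<tau>. G \<tau> * of_bool (\<tau> \<le> s) \<partial>lborel) \<partial>lborel)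
       = (\<integral>\<tau>. G \<tau> * (\<integral>s. F s * of_bool (\<tau> \<le> s) \<partial>lborel) \<partial>lborel)"
proof -
  have Fm[measurable]: "F \<in> borel_measurable lborel" using F by auto
  have Gm[measurable]: "G \<in> borel_measurable lborel" using G by auto
  define f where "f = (\<lambda>s \<tau>. F s * (G \<tau> * of_bool (\<tau> \<le> s)))"
  have fm[measurable]: "(\<lambda>(s,\<tau>). f s \<tau>) \<in> borel_measurable (lborel \<Otimes>\<^sub>M lborel)"
    unfolding f_def by measurable
  have int: "integrable (lborel \<Otimes>\<^sub>M lborel) (\<lambda>(s,\<tau>). f s \<tau>)"
  proof (rule lborel_pair.Fubini_integrable)
    show "(\<lambda>(s,\<tau>). f s \<tau>) \<in> borel_measurable (lborel \<Otimes>\<^sub>M lborel)" by (rule fm)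
    show "integrable lborel (\<lambda>x. \<integral>y. norm (case (x, y) of (s, \<tau>) \<Rightarrow> f s \<tau>) \<partial>lborel)"
    proof (rule Bochner_Integration.integrable_bound[where f="\<lambda>s. \<bar>F s\<bar> * (\<integral>\<tau>. \<bar>G \<tau>\<bar> \<partial>lborel)"])
      show "integrable lborel (\<lambda>s. \<bar>F s\<bar> * (\<integral>\<tau>. \<bar>G \<tau>\<bar> \<partial>lborel))" using F by auto
      show "(\<lambda>x. \<integral>y. norm (case (x, y) of (s, \<tau>) \<Rightarrow> f s \<tau>) \<partial>lborel) \<in> borel_measurable lborel"
        unfolding f_def by measurable
      show "AE x in lborel. norm (\<integral>y. norm (case (x, y) of (s, \<tau>) \<Rightarrow> f s \<tau>) \<partial>lborel)
            \<le> norm (\<bar>F x\<bar> * (\<integral>\<tau>. \<bar>G \<tau>\<bar> \<partial>lborel))"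
      proof (rule AE_I2)
        fix x
        have "(\<integral>y. norm (f x y) \<partial>lborel) = (\<integral>y. \<bar>F x\<bar> * (\<bar>G y\<bar> * of_bool (y \<le> x)) \<partial>lborel)"
          unfolding f_def by (intro Bochner_Integration.integral_cong) (auto simp: abs_mult)
        also have "\<dots> = \<bar>F x\<bar> * (\<integral>y. \<bar>G y\<bar> * of_bool (y \<le> x) \<partial>lborel)" by simp
        also have "\<dots> \<le> \<bar>F x\<bar> * (\<integral>y. \<bar>G y\<bar> \<partial>lborel)"
        proof (intro mult_left_mono integral_mono)
          show "integrable lborel (\<lambda>y. \<bar>G y\<bar> * of_bool (y \<le> x))"
            by (rule Bochner_Integration.integrable_bound[where f="\<lambda>y. \<bar>G y\<bar>"]) (use G in auto)
        qed (use G in auto)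
        finally show "norm (\<integral>y. norm (case (x, y) of (s, \<tau>) \<Rightarrow> f s \<tau>) \<partial>lborel)
            \<le> norm (\<bar>F x\<bar> * (\<integral>\<tau>. \<bar>G \<tau>\<bar> \<partial>lborel))"
          by (simp add: integral_nonneg_AE)
      qed
    qed
    show "AE x in lborel. integrable lborel (\<lambda>y. case (x, y) of (s, \<tau>) \<Rightarrow> f s \<tau>)"
    proof (rule AE_I2)
      fix x show "integrable lborel (\<lambda>y. case (x, y) of (s, \<tau>) \<Rightarrow> f s \<tau>)"
        unfolding f_def
        by (rule Bochner_Integration.integrable_bound[where f="\<lambda>y. \<bar>F x\<bar> * \<bar>G y\<bar>"]) (use G in \<open>auto simp: abs_mult\<close>)
    qed
  qed
  have "(\<integral>\<tau>. (\<integral>s. f s \<tau> \<partial>lborel) \<partial>lborel) = (\<integral>s. (\<integral>\<tau>. f s \<tau> \<partial>lborel) \<partial>lborel)"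
    by (rule lborel_pair.Fubini_integral[OF int])
  moreover have "(\<lambda>s. \<integral>\<tau>. f s \<tau> \<partial>lborel) = (\<lambda>s. F s * (\<integral>\<tau>. G \<tau> * of_bool (\<tau> \<le> s) \<partial>lborel))"
    unfolding f_def by simp
  moreover have "(\<lambda>\<tau>. \<integral>s. f s \<tau> \<partial>lborel) = (\<lambda>\<tau>. G \<tau> * (\<integral>s. F s * of_bool (\<tau> \<le> s) \<partial>lborel))"
    unfolding f_def by (auto simp: mult.left_commute[of "F _"] intro!: ext)
  ultimately show ?thesis by simp
qed

lemma cont_bound:
  fixes g :: "real \<Rightarrow> real"
  assumes "continuous_on {a..b} g"
  shows "\<exists>B>0. \<forall>x\<in>{a..b}. \<bar>g x\<bar> \<le> B"
proof -
  have "bounded (g ` {a..b})" by (rule compact_imp_bounded[OF compact_continuous_image[OF assms compact_Icc]])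
  then obtain B where "B > 0" "\<forall>y\<in>g ` {a..b}. norm y \<le> B" by (auto simp: bounded_pos)
  then show ?thesis by auto
qed

lemma set_bm_mult:
  fixes f g :: "real \<Rightarrow> real"
  assumes "set_borel_measurable lborel A f" "set_borel_measurable lborel A g"
  shows "set_borel_measurable lborel A (\<lambda>x. f x * g x)"
proof -
  have "(\<lambda>x. (indicator A x *\<^sub>R f x) * (indicator A x *\<^sub>R g x)) \<in> borel_measurable lborel"
    using assms unfolding set_borel_measurable_def by measurable
  moreover have "(\<lambda>x. (indicator A x *\<^sub>R f x) * (indicator A x *\<^sub>R g x)) = (\<lambda>x. indicator A x *\<^sub>R (f x * g x))"
    by (auto simp: indicator_def)
  ultimately show ?thesis unfolding set_borel_measurable_def by simp
qed

lemma set_integrable_bm: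
  fixes f :: "real \<Rightarrow> real"
  shows "set_integrable lborel A f \<Longrightarrow> set_borel_measurable lborel A f"
  unfolding set_integrable_def set_borel_measurable_def by auto

lemma cont_bm:
  fixes g :: "real \<Rightarrow> real"
  shows "continuous_on {a..b} g \<Longrightarrow> set_borel_measurable lborel {a..b} g"
  using set_measurable_continuous_on[of "{a..b}" g] unfolding set_borel_measurable_def by auto

lemma set_integrable_mult_cont:
  fixes f g :: "real \<Rightarrow> real"
  assumes f: "set_integrable lborel {a..b} f" and g: "continuous_on {a..b} g"
  shows "set_integrable lborel {a..b} (\<lambda>x. f x * g x)"
proof -
  obtain B where B: "B > 0" "\<forall>x\<in>{a..b}. \<bar>g x\<bar> \<le> B" using cont_bound[OF g] by auto
  show ?thesis
  proof (rule set_integrable_bound[where f="\<lambda>x. B * f x"])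
    show "set_integrable lborel {a..b} (\<lambda>x. B * f x)" using f by simp
    show "set_borel_measurable lborel {a..b} (\<lambda>x. f x * g x)"
      by (rule set_bm_mult[OF set_integrable_bm[OF f] cont_bm[OF g]])
    show "AE x in lborel. x \<in> {a..b} \<longrightarrow> norm (f x * g x) \<le> norm (B * f x)"
      proof (intro AE_I2 impI)
      fix x assume "x \<in> {a..b}"
      then have "\<bar>g x\<bar> \<le> B" using B by auto
      then show "norm (f x * g x) \<le> norm (B * f x)"
        by (simp add: abs_mult) (metis abs_ge_zero mult.commute mult_left_mono)
    qed
  qed
qed

lemma set_integrable_mult_cont':
  fixes f g :: "real \<Rightarrow> real"
  assumes f: "set_integrable lborel {a..b} f" and g: "continuous_on {a..b} g"
  shows "set_integrable lborel {a..b} (\<lambda>x. g x * f x)"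
  using set_integrable_mult_cont[OF assms] by (simp add: mult.commute)



lemma H1_eq:
  assumes "H1 a b u u'" "x \<in> {a..b}"
  shows "u x = u a + (LINT s:{a..x}|lborel. u' s)"
proof -
  have "u x = u a + (LBINT s=a..x. u' s)" using assms unfolding H1_def by blast
  moreover have "a \<le> x" using assms(2) by simp
  ultimately show ?thesis by (simp add: interval_integral_Icc)
qed

lemma H1_int:
  assumes "H1 a b u u'" "{c..d} \<subseteq> {a..b}"
  shows "set_integrable lborel {c..d} u'"
proof -
  have i: "set_integrable lborel {a..b} u'" using assms(1) unfolding H1_def by blast
  show ?thesis by (rule set_integrable_subset[OF i]) (use assms(2) in simp_all)
qed

lemma H1_int2:
  assumes "H1 a b u u'" "{c..d} \<subseteq> {a..b}"
  shows "set_integrable lborel {c..d} (\<lambda>s. (u' s)\<^sup>2)"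
proof -
  have i: "set_integrable lborel {a..b} (\<lambda>s. (u' s)\<^sup>2)" using assms(1) unfolding H1_def by blast
  show ?thesis by (rule set_integrable_subset[OF i]) (use assms(2) in simp_all)
qed

lemma H1_cont:
  assumes "H1 a b u u'"
  shows "continuous_on {a..b} u"
proof -
  have i: "set_integrable lborel {a..b} u'" using assms unfolding H1_def by blast
  have "continuous_on {a..b} (\<lambda>x. u a + integral {a..x} u')"
    by (intro continuous_intros indefinite_integral_continuous_1 set_borel_integral_eq_integral(1)[OF i])
  moreover have "u x = u a + integral {a..x} u'" if "x \<in> {a..b}" for x
  proof -
    have "{a..x} \<subseteq> {a..b}" using that by auto
    then have "set_integrable lborel {a..x} u'" using H1_int[OF assms] by blast
    then show ?thesis using H1_eq[OF assms that] set_borel_integral_eq_integral(2) by metis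
  qed
  ultimately show ?thesis using continuous_on_eq by (metis (no_types, lifting))
qed

lemma LINT_split:
  fixes f :: "real \<Rightarrow> real"
  assumes f: "set_integrable lborel {a..c} f" and ab: "a \<le> b" and bc: "b \<le> c"
  shows "(LINT s:{a..c}|lborel. f s) = (LINT s:{a..b}|lborel. f s) + (LINT s:{b..c}|lborel. f s)"
proof -
  have e: "{a..c} = {a..b} \<union> {b<..c}" using ab bc by auto
  have i1: "set_integrable lborel {a..b} f" by (rule set_integrable_subset[OF f]) (use bc in auto)
  have i2: "set_integrable lborel {b<..c} f" by (rule set_integrable_subset[OF f]) (use ab in auto)
  have "(LINT s:{a..c}|lborel. f s) = (LINT s:{a..b}|lborel. f s) + (LINT s:{b<..c}|lborel. f s)"
    unfolding e by (rule set_integral_Un[OF _ i1 i2]) auto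
  moreover have "(LINT s:{b<..c}|lborel. f s) = (LINT s:{b..c}|lborel. f s)"
    using interval_integral_Ioc[of b c f] interval_integral_Icc[of b c f] bc by simp
  ultimately show ?thesis by simp
qed

lemma H1_diff:
  assumes "H1 a b u u'" "x \<in> {a..b}" "y \<in> {a..b}" "x \<le> y"
  shows "u y - u x = (LINT s:{x..y}|lborel. u' s)"
proof -
  have "(LINT s:{a..y}|lborel. u' s) = (LINT s:{a..x}|lborel. u' s) + (LINT s:{x..y}|lborel. u' s)"
    by (rule LINT_split[OF H1_int[OF assms(1)]]) (use assms in auto)
  then show ?thesis using H1_eq[OF assms(1,2)] H1_eq[OF assms(1,3)] by simp
qed

lemma LINT_as_integral:
  fixes f :: "real \<Rightarrow> real"
  shows "(LINT s:A|lborel. f s) = (\<integral>s. f s * indicator A s \<partial>lborel)"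
  unfolding set_lebesgue_integral_def by (simp add: mult.commute)



lemma H1_prod:
  assumes u: "H1 a b u u'" and w: "H1 a b w w'" and x: "x \<in> {a..b}"
  shows "set_integrable lborel {a..x} (\<lambda>s. u' s * w s + u s * w' s)"
    and "u x * w x = u a * w a + (LINT s:{a..x}|lborel. u' s * w s + u s * w' s)"
proof -
  have sub: "{a..x} \<subseteq> {a..b}" using x by auto
  have cu: "continuous_on {a..x} u" using H1_cont[OF u] continuous_on_subset sub by blast
  have cw: "continuous_on {a..x} w" using H1_cont[OF w] continuous_on_subset sub by blast
  have iu: "set_integrable lborel {a..x} u'" using H1_int[OF u sub] .
  have iw: "set_integrable lborel {a..x} w'" using H1_int[OF w sub] .
  have i1: "set_integrable lborel {a..x} (\<lambda>s. u' s * w s)" by (rule set_integrable_mult_cont[OF iu cw])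
  have i2: "set_integrable lborel {a..x} (\<lambda>s. u s * w' s)" by (rule set_integrable_mult_cont'[OF iw cu])
  show "set_integrable lborel {a..x} (\<lambda>s. u' s * w s + u s * w' s)" using i1 i2 by (rule set_integral_add)
  define F where "F = (\<lambda>s. u' s * indicator {a..x} s)"
  define G where "G = (\<lambda>s. w' s * indicator {a..x} s)"
  have F: "integrable lborel F" using iu unfolding F_def set_integrable_def by (simp add: mult.commute)
  have G: "integrable lborel G" using iw unfolding G_def set_integrable_def by (simp add: mult.commute)
  have eq1: "(\<integral>\<tau>. G \<tau> * of_bool (\<tau> \<le> s) \<partial>lborel) = w s - w a" if "s \<in> {a..x}" for s
  proof -
    have "(\<integral>\<tau>. G \<tau> * of_bool (\<tau> \<le> s) \<partial>lborel) = (LINT \<tau>:{a..s}|lborel. w' \<tau>)"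
      unfolding LINT_as_integral G_def using that
      by (intro Bochner_Integration.integral_cong) (auto simp: indicator_def)
    also have "\<dots> = w s - w a"
    proof -
      have "s \<in> {a..b}" using that x by auto
      from H1_eq[OF w this] show ?thesis by simp
    qed
    finally show ?thesis .
  qed
  have eq2: "(\<integral>s. F s * of_bool (\<tau> \<le> s) \<partial>lborel) = u x - u \<tau>" if "\<tau> \<in> {a..x}" for \<tau>
  proof -
    have "(\<integral>s. F s * of_bool (\<tau> \<le> s) \<partial>lborel) = (LINT s:{\<tau>..x}|lborel. u' s)"
      unfolding LINT_as_integral F_def using that
      by (intro Bochner_Integration.integral_cong) (auto simp: indicator_def)
    also have "\<dots> = u x - u \<tau>"
    proof -
      have "\<tau> \<in> {a..b}" "\<tau> \<le> x" using that x by auto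
      from H1_diff[OF u this(1) x this(2)] show ?thesis by simp
    qed
    finally show ?thesis .
  qed
  have L: "(\<integral>s. F s * (\<integral>\<tau>. G \<tau> * of_bool (\<tau> \<le> s) \<partial>lborel) \<partial>lborel)
      = (LINT s:{a..x}|lborel. u' s * (w s - w a))"
    unfolding LINT_as_integral F_def
    by (intro Bochner_Integration.integral_cong) (auto simp: eq1 indicator_def)
  have R: "(\<integral>\<tau>. G \<tau> * (\<integral>s. F s * of_bool (\<tau> \<le> s) \<partial>lborel) \<partial>lborel)
      = (LINT s:{a..x}|lborel. w' s * (u x - u s))"
    unfolding LINT_as_integral G_def
    by (intro Bochner_Integration.integral_cong) (auto simp: eq2 indicator_def)
  have main: "(LINT s:{a..x}|lborel. u' s * (w s - w a)) = (LINT s:{a..x}|lborel. w' s * (u x - u s))"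
    using fubini_tri[OF F G] L R by simp
  have "(LINT s:{a..x}|lborel. u' s * (w s - w a)) = (LINT s:{a..x}|lborel. u' s * w s) - w a * (LINT s:{a..x}|lborel. u' s)"
    using i1 iu by (simp add: right_diff_distrib set_integral_diff mult.commute)
  moreover have "(LINT s:{a..x}|lborel. w' s * (u x - u s)) = u x * (LINT s:{a..x}|lborel. w' s) - (LINT s:{a..x}|lborel. u s * w' s)"
    using i2 iw by (simp add: right_diff_distrib set_integral_diff mult.commute)
  moreover have "(LINT s:{a..x}|lborel. u' s * w s + u s * w' s) = (LINT s:{a..x}|lborel. u' s * w s) + (LINT s:{a..x}|lborel. u s * w' s)"
    using i1 i2 by (rule set_integral_add)
  moreover have "u x = u a + (LINT s:{a..x}|lborel. u' s)" "w x = w a + (LINT s:{a..x}|lborel. w' s)"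
    using H1_eq[OF u x] H1_eq[OF w x] by auto
  ultimately show "u x * w x = u a * w a + (LINT s:{a..x}|lborel. u' s * w s + u s * w' s)"
    using main by (simp add: algebra_simps)
qed



lemma vderiv_cont:
  fixes F f :: "real \<Rightarrow> real"
  assumes "\<And>x. x \<in> S \<Longrightarrow> (F has_real_derivative f x) (at x within S)"
  shows "continuous_on S F"
  unfolding continuous_on_eq_continuous_within
  using assms DERIV_continuous by blast

lemma C1_H1:
  fixes w w' :: "real \<Rightarrow> real"
  assumes ab: "a \<le> b" and c: "continuous_on {a..b} w'"
    and d: "\<And>x. x \<in> {a..b} \<Longrightarrow> (w has_real_derivative w' x) (at x within {a..b})"
  shows "H1 a b w w'"
  unfolding H1_def
proof (intro conjI ballI)
  show "set_integrable lborel {a..b} w'" by (rule borel_integrable_atLeastAtMost'[OF c])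
  show "set_integrable lborel {a..b} (\<lambda>s. (w' s)\<^sup>2)"
    by (rule borel_integrable_atLeastAtMost') (intro continuous_intros c)
  fix x assume x: "x \<in> {a..b}"
  have "(LBINT s=a..x. w' s) = w x - w a"
  proof (rule interval_integral_FTC_finite)
    show "continuous_on {min a x..max a x} w'"
      using x by (auto intro: continuous_on_subset[OF c])
    fix y assume y: "min a x \<le> y" "y \<le> max a x"
    then have "y \<in> {a..b}" "{min a x..max a x} \<subseteq> {a..b}" using x by auto
    then have "(w has_real_derivative w' y) (at y within {min a x..max a x})"
      using d has_field_derivative_subset by blast
    then show "(w has_vector_derivative w' y) (at y within {min a x..max a x})"
      by (simp add: has_real_derivative_iff_has_vector_derivative)
  qed
  then show "w x = w a + (LBINT s=a..x. w' s)" by simp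
qed

lemma two_abs_le:
  fixes x y :: real
  shows "2 * \<bar>x * y\<bar> \<le> x\<^sup>2 + y\<^sup>2"
proof -
  have "0 \<le> (\<bar>x\<bar> - \<bar>y\<bar>)\<^sup>2" by simp
  then show ?thesis by (simp add: power2_eq_square abs_mult algebra_simps abs_mult_self)
qed

lemma set_integrable_L2:
  fixes f g :: "real \<Rightarrow> real"
  assumes f: "set_integrable lborel A f" and g: "set_integrable lborel A g"
    and f2: "set_integrable lborel A (\<lambda>x. (f x)\<^sup>2)" and g2: "set_integrable lborel A (\<lambda>x. (g x)\<^sup>2)"
  shows "set_integrable lborel A (\<lambda>x. f x * g x)"
proof (rule set_integrable_bound[where f="\<lambda>x. (f x)\<^sup>2 + (g x)\<^sup>2"])
  show "set_integrable lborel A (\<lambda>x. (f x)\<^sup>2 + (g x)\<^sup>2)" using f2 g2 by (rule set_integral_add)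
  show "set_borel_measurable lborel A (\<lambda>x. f x * g x)"
    by (rule set_bm_mult[OF set_integrable_bm[OF f] set_integrable_bm[OF g]])
  show "AE x in lborel. x \<in> A \<longrightarrow> norm (f x * g x) \<le> norm ((f x)\<^sup>2 + (g x)\<^sup>2)"
  proof (intro AE_I2 impI)
    fix x
    have "2 * \<bar>f x * g x\<bar> \<le> (f x)\<^sup>2 + (g x)\<^sup>2" by (rule two_abs_le)
    moreover have "0 \<le> \<bar>f x * g x\<bar>" by simp
    ultimately show "norm (f x * g x) \<le> norm ((f x)\<^sup>2 + (g x)\<^sup>2)" by simp
  qed
qed

lemma H1_mult:
  assumes u: "H1 a b u u'" and w: "H1 a b w w'" and ab: "a \<le> b"
  shows "H1 a b (\<lambda>x. u x * w x) (\<lambda>s. u' s * w s + u s * w' s)"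
  unfolding H1_def
proof (intro conjI ballI)
  have b: "b \<in> {a..b}" using ab by auto
  show i: "set_integrable lborel {a..b} (\<lambda>s. u' s * w s + u s * w' s)" using H1_prod(1)[OF u w b] .
  have cu: "continuous_on {a..b} u" by (rule H1_cont[OF u])
  have cw: "continuous_on {a..b} w" by (rule H1_cont[OF w])
  have i1: "set_integrable lborel {a..b} (\<lambda>s. (u' s)\<^sup>2 * (w s)\<^sup>2)"
    by (rule set_integrable_mult_cont[OF H1_int2[OF u]]) (auto intro: continuous_intros cw)
  show "set_integrable lborel {a..b} (\<lambda>s. (u' s * w s + u s * w' s)\<^sup>2)"
  proof (rule set_integrable_bound[where f="\<lambda>s. 2 * ((u' s)\<^sup>2 * (w s)\<^sup>2) + 2 * ((w' s)\<^sup>2 * (u s)\<^sup>2)"])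
    show "set_integrable lborel {a..b} (\<lambda>s. 2 * ((u' s)\<^sup>2 * (w s)\<^sup>2) + 2 * ((w' s)\<^sup>2 * (u s)\<^sup>2))"
    proof (rule set_integral_add)
      show "set_integrable lborel {a..b} (\<lambda>s. 2 * ((u' s)\<^sup>2 * (w s)\<^sup>2))" using i1 by simp
      have "set_integrable lborel {a..b} (\<lambda>s. (w' s)\<^sup>2 * (u s)\<^sup>2)"
        by (rule set_integrable_mult_cont[OF H1_int2[OF w]]) (auto intro: continuous_intros cu)
      then show "set_integrable lborel {a..b} (\<lambda>s. 2 * ((w' s)\<^sup>2 * (u s)\<^sup>2))" by simp
    qed
    show "set_borel_measurable lborel {a..b} (\<lambda>s. (u' s * w s + u s * w' s)\<^sup>2)"
      using set_bm_mult[OF set_integrable_bm[OF i] set_integrable_bm[OF i]] by (simp add: power2_eq_square)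
    show "AE x in lborel. x \<in> {a..b} \<longrightarrow> norm ((u' x * w x + u x * w' x)\<^sup>2) \<le> norm (2 * ((u' x)\<^sup>2 * (w x)\<^sup>2) + 2 * ((w' x)\<^sup>2 * (u x)\<^sup>2))"
    proof (intro AE_I2 impI)
      fix x
      have "2 * \<bar>(u' x * w x) * (u x * w' x)\<bar> \<le> (u' x * w x)\<^sup>2 + (u x * w' x)\<^sup>2" by (rule two_abs_le)
      then have "(u' x * w x + u x * w' x)\<^sup>2 \<le> 2 * ((u' x)\<^sup>2 * (w x)\<^sup>2) + 2 * ((w' x)\<^sup>2 * (u x)\<^sup>2)"
        by (simp add: power2_eq_square algebra_simps)
      then show "norm ((u' x * w x + u x * w' x)\<^sup>2) \<le> norm (2 * ((u' x)\<^sup>2 * (w x)\<^sup>2) + 2 * ((w' x)\<^sup>2 * (u x)\<^sup>2))"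
        by simp
    qed
  qed
  fix x assume x: "x \<in> {a..b}"
  from H1_prod(2)[OF u w x] show "u x * w x = u a * w a + (LBINT s=a..x. u' s * w s + u s * w' s)"
    using x by (simp add: interval_integral_Icc)
qed

lemma H1_lin:
  assumes u: "H1 a b u u'" and w: "H1 a b w w'" and ab: "a \<le> b"
  shows "H1 a b (\<lambda>x. u x + c * w x) (\<lambda>s. u' s + c * w' s)"
  unfolding H1_def
proof (intro conjI ballI)
  have iu: "set_integrable lborel {a..b} u'" using H1_int[OF u] by simp
  have iw: "set_integrable lborel {a..b} w'" using H1_int[OF w] by simp
  have iu2: "set_integrable lborel {a..b} (\<lambda>s. (u' s)\<^sup>2)" using H1_int2[OF u] by simp
  have iw2: "set_integrable lborel {a..b} (\<lambda>s. (w' s)\<^sup>2)" using H1_int2[OF w] by simp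
  have iuw: "set_integrable lborel {a..b} (\<lambda>s. u' s * w' s)" by (rule set_integrable_L2[OF iu iw iu2 iw2])
  show "set_integrable lborel {a..b} (\<lambda>s. u' s + c * w' s)"
    using iu iw by (intro set_integral_add) auto
  have "set_integrable lborel {a..b} (\<lambda>s. (u' s)\<^sup>2 + (2 * c * (u' s * w' s) + c\<^sup>2 * (w' s)\<^sup>2))"
    using iu2 iuw iw2 by (intro set_integral_add) auto
  moreover have "(\<lambda>s. (u' s)\<^sup>2 + (2 * c * (u' s * w' s) + c\<^sup>2 * (w' s)\<^sup>2)) = (\<lambda>s. (u' s + c * w' s)\<^sup>2)"
    by (auto simp: power2_eq_square algebra_simps)
  ultimately show "set_integrable lborel {a..b} (\<lambda>s. (u' s + c * w' s)\<^sup>2)" by simp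
  fix x assume x: "x \<in> {a..b}"
  have sub: "{a..x} \<subseteq> {a..b}" using x by auto
  have "(LINT s:{a..x}|lborel. u' s + c * w' s) = (LINT s:{a..x}|lborel. u' s) + c * (LINT s:{a..x}|lborel. w' s)"
    using H1_int[OF u sub] H1_int[OF w sub] by (subst set_integral_add) auto
  then show "u x + c * w x = u a + c * w a + (LBINT s=a..x. u' s + c * w' s)"
    using H1_eq[OF u x] H1_eq[OF w x] x by (simp add: interval_integral_Icc algebra_simps)
qed

lemma neg_integral:
  fixes f :: "real \<Rightarrow> real"
  assumes ab: "a < b" and c: "continuous_on {a..b} f" and neg: "\<And>x. a < x \<Longrightarrow> x < b \<Longrightarrow> f x < 0"
  shows "(LINT s:{a..b}|lborel. f s) < 0"
proof -
  define F where "F = (\<lambda>x. LBINT y=a..x. f y)"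
  have d: "(F has_real_derivative f x) (at x within {a..b})" if "x \<in> {a..b}" for x
    using interval_integral_FTC2[of a a b f x] ab c that unfolding F_def
    by (simp add: has_real_derivative_iff_has_vector_derivative)
  have "F b < F a"
  proof (rule DERIV_neg_imp_decreasing_open[OF ab])
    fix x assume x: "a < x" "x < b"
    then have "x \<in> interior {a..b}" by auto
    then have "at x within {a..b} = at x" by (rule at_within_interior)
    then have "(F has_real_derivative f x) (at x)" using d[of x] x by auto
    then show "\<exists>y. (F has_real_derivative y) (at x) \<and> y < 0" using neg x by blast
  next
    show "continuous_on {a..b} F" by (rule vderiv_cont[OF d])
  qed
  then show ?thesis unfolding F_def using ab by (simp add: interval_integral_Icc)
qed



lemma expand_id:
  fixes H D P Q r s t hp :: real
  assumes "r \<noteq> 0"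
  shows "((1/2) * (D + s * Q)\<^sup>2 + 3 / r\<^sup>2 * (H + s * P)\<^sup>2 + t / 8 * (1 - (H + s * P)\<^sup>2)\<^sup>2
       + hp / 8 * (1 + 3 * (H + s * P)^4 - 4 * (H + s * P)^3)) * r\<^sup>2
   = ((1/2) * D\<^sup>2 + 3 / r\<^sup>2 * H\<^sup>2 + t / 8 * (1 - H\<^sup>2)\<^sup>2 + hp / 8 * (1 + 3 * H^4 - 4 * H^3)) * r\<^sup>2
     + s * (D * Q * r\<^sup>2 + (6 * H + r\<^sup>2 * ((t / 2 * (H\<^sup>2 - 1) + 3 * hp / 2 * (H\<^sup>2 - H)) * H)) * P)
     + s\<^sup>2 * (Q\<^sup>2 * (r\<^sup>2 / 2) + (3 * P\<^sup>2 + r\<^sup>2 * P\<^sup>2 * (t * (3 * H\<^sup>2 - 1) / 4 + hp * (9 * H\<^sup>2 - 6 * H) / 4)))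
     + s^3 * (r\<^sup>2 * P^3 * (t * H / 2 + hp * (3 * H - 1) / 2))
     + s^4 * (r\<^sup>2 * P^4 * (t / 8 + 3 * hp / 8))"
  using assms by (simp add: field_simps power2_eq_square power3_eq_cube power4_eq_xxxx)

lemma LINT_cong:
  fixes f g :: "real \<Rightarrow> real"
  assumes "\<And>x. x \<in> {a..b} \<Longrightarrow> f x = g x"
  shows "(LINT x:{a..b}|lborel. f x) = (LINT x:{a..b}|lborel. g x)"
  by (rule set_lebesgue_integral_cong) (use assms in auto)

lemma si_form:
  fixes f c d :: "real \<Rightarrow> real"
  assumes "set_integrable lborel {a..b} f" "continuous_on {a..b} c" "continuous_on {a..b} d"
  shows "set_integrable lborel {a..b} (\<lambda>r. f r * c r + d r)"
  using set_integrable_mult_cont[OF assms(1,2)] borel_integrable_atLeastAtMost'[OF assms(3)]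
  by (rule set_integral_add)

lemma energy_LINT:
  assumes "R > 1"
  shows "energy t R g g' = (LINT r:{1..R}|lborel. ((1/2) * (g' r)\<^sup>2 + 3 / r\<^sup>2 * (g r)\<^sup>2 + t / 8 * (1 - (g r)\<^sup>2)\<^sup>2
       + hplus t / 8 * (1 + 3 * (g r)^4 - 4 * (g r)^3)) * r\<^sup>2)"
  unfolding energy_def one_ereal_def by (rule interval_integral_Icc) (use assms in simp)

lemma weak_EL:
  assumes R: "R > 1" and hH: "H1 1 R h h'" and h1: "h 1 = 1" and hR: "h R = 1"
    and min: "\<forall>g g'. H1 1 R g g' \<and> g 1 = 1 \<and> g R = 1 \<longrightarrow> energy t R h h' \<le> energy t R g g'"
    and pH: "H1 1 R \<phi> \<phi>'" and p1: "\<phi> 1 = 0" and pR: "\<phi> R = 0"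
  shows "(LINT r:{1..R}|lborel. h' r * \<phi>' r * r\<^sup>2 + (6 * h r + r\<^sup>2 * (fh t (h r) * h r)) * \<phi> r) = 0"
proof -
  define hp where "hp = hplus t"
  define e0 where "e0 = (\<lambda>r. ((1/2) * (h' r)\<^sup>2 + 3 / r\<^sup>2 * (h r)\<^sup>2 + t / 8 * (1 - (h r)\<^sup>2)\<^sup>2
       + hp / 8 * (1 + 3 * (h r)^4 - 4 * (h r)^3)) * r\<^sup>2)"
  define e1 where "e1 = (\<lambda>r. h' r * \<phi>' r * r\<^sup>2 + (6 * h r + r\<^sup>2 * ((t / 2 * ((h r)\<^sup>2 - 1) + 3 * hp / 2 * ((h r)\<^sup>2 - h r)) * h r)) * \<phi> r)"
  define e2 where "e2 = (\<lambda>r. (\<phi>' r)\<^sup>2 * (r\<^sup>2 / 2) + (3 * (\<phi> r)\<^sup>2 + r\<^sup>2 * (\<phi> r)\<^sup>2 * (t * (3 * (h r)\<^sup>2 - 1) / 4 + hp * (9 * (h r)\<^sup>2 - 6 * h r) / 4)))"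
  define e3 where "e3 = (\<lambda>r. r\<^sup>2 * (\<phi> r)^3 * (t * h r / 2 + hp * (3 * h r - 1) / 2))"
  define e4 where "e4 = (\<lambda>r. r\<^sup>2 * (\<phi> r)^4 * (t / 8 + 3 * hp / 8))"
  have ch: "continuous_on {1..R} h" by (rule H1_cont[OF hH])
  have cp: "continuous_on {1..R} \<phi>" by (rule H1_cont[OF pH])
  have nz: "\<forall>r\<in>{1..R}. r\<^sup>2 \<noteq> (0::real)" by auto
  have i0: "set_integrable lborel {1..R} e0"
  proof -
    have "set_integrable lborel {1..R} (\<lambda>r. (h' r)\<^sup>2 * (r\<^sup>2 / 2) + (3 / r\<^sup>2 * (h r)\<^sup>2 + t / 8 * (1 - (h r)\<^sup>2)\<^sup>2
       + hp / 8 * (1 + 3 * (h r)^4 - 4 * (h r)^3)) * r\<^sup>2)"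
      by (rule si_form[OF H1_int2[OF hH]]) (use nz in \<open>auto intro!: continuous_intros ch\<close>)
    moreover have "(\<lambda>r. (h' r)\<^sup>2 * (r\<^sup>2 / 2) + (3 / r\<^sup>2 * (h r)\<^sup>2 + t / 8 * (1 - (h r)\<^sup>2)\<^sup>2
       + hp / 8 * (1 + 3 * (h r)^4 - 4 * (h r)^3)) * r\<^sup>2) = e0"
      unfolding e0_def by (auto simp: algebra_simps)
    ultimately show ?thesis by simp
  qed
  have i1: "set_integrable lborel {1..R} e1"
  proof -
    have "set_integrable lborel {1..R} (\<lambda>r. h' r * \<phi>' r)"
      by (rule set_integrable_L2[OF H1_int[OF hH] H1_int[OF pH] H1_int2[OF hH] H1_int2[OF pH]]) auto
    then show ?thesis unfolding e1_def
      by (rule si_form) (auto intro!: continuous_intros ch cp)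
  qed
  have i2: "set_integrable lborel {1..R} e2"
    unfolding e2_def by (rule si_form[OF H1_int2[OF pH]]) (auto intro!: continuous_intros ch cp)
  have i3: "set_integrable lborel {1..R} e3"
    unfolding e3_def by (rule borel_integrable_atLeastAtMost') (auto intro!: continuous_intros ch cp)
  have i4: "set_integrable lborel {1..R} e4"
    unfolding e4_def by (rule borel_integrable_atLeastAtMost') (auto intro!: continuous_intros ch cp)
  define E where "E = (\<lambda>k. LINT r:{1..R}|lborel. (case k of 0 \<Rightarrow> e0 r | Suc 0 \<Rightarrow> e1 r | Suc (Suc 0) \<Rightarrow> e2 r
        | Suc (Suc (Suc 0)) \<Rightarrow> e3 r | _ \<Rightarrow> e4 r))"
  have en: "energy t R (\<lambda>r. h r + s * \<phi> r) (\<lambda>r. h' r + s * \<phi>' r)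
      = E 0 + s * E 1 + s\<^sup>2 * E 2 + s^3 * E 3 + s^4 * E 4" for s
  proof -
    have "energy t R (\<lambda>r. h r + s * \<phi> r) (\<lambda>r. h' r + s * \<phi>' r)
       = (LINT r:{1..R}|lborel. e0 r + s * e1 r + s\<^sup>2 * e2 r + s^3 * e3 r + s^4 * e4 r)"
      unfolding energy_LINT[OF R]
    proof (rule LINT_cong)
      fix r :: real assume "r \<in> {1..R}"
      then have "r \<noteq> 0" by auto
      from expand_id[OF this, of "h' r" s "\<phi>' r" "h r" "\<phi> r" t hp]
      show "((1/2) * (h' r + s * \<phi>' r)\<^sup>2 + 3 / r\<^sup>2 * (h r + s * \<phi> r)\<^sup>2 + t / 8 * (1 - (h r + s * \<phi> r)\<^sup>2)\<^sup>2
       + hplus t / 8 * (1 + 3 * (h r + s * \<phi> r)^4 - 4 * (h r + s * \<phi> r)^3)) * r\<^sup>2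
         = e0 r + s * e1 r + s\<^sup>2 * e2 r + s^3 * e3 r + s^4 * e4 r"
        unfolding e0_def e1_def e2_def e3_def e4_def hp_def by simp
    qed
    also have "\<dots> = E 0 + s * E 1 + s\<^sup>2 * E 2 + s^3 * E 3 + s^4 * E 4"
      unfolding E_def using i0 i1 i2 i3 i4
      by (simp add: set_integral_add set_integral_mult_right set_integrable_mult_right)
    finally show ?thesis .
  qed
  have en0: "energy t R h h' = E 0"
    unfolding energy_LINT[OF R] E_def e0_def hp_def by simp
  have ge: "E 0 \<le> E 0 + s * E 1 + s\<^sup>2 * E 2 + s^3 * E 3 + s^4 * E 4" for s
  proof -
    have "H1 1 R (\<lambda>r. h r + s * \<phi> r) (\<lambda>r. h' r + s * \<phi>' r)" using H1_lin[OF hH pH] R by simp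
    then show ?thesis using min h1 hR p1 pR en en0 by fastforce
  qed
  define P where "P = (\<lambda>s. s * E 1 + s\<^sup>2 * E 2 + s^3 * E 3 + s^4 * E 4)"
  have "DERIV P 0 :> E 1"
    unfolding P_def by (auto intro!: derivative_eq_intros)
  moreover have "\<forall>y. \<bar>0 - y\<bar> < 1 \<longrightarrow> P 0 \<le> P y"
    using ge unfolding P_def by (auto simp: algebra_simps)
  ultimately have "E 1 = 0" by (rule DERIV_local_min[OF _ zero_less_one])
  then show ?thesis unfolding E_def e1_def fh_def hp_def by simp
qed



lemma LINT_cong_AE:
  fixes f g :: "real \<Rightarrow> real"
  assumes "set_borel_measurable lborel A f" "set_borel_measurable lborel A g"
    and "AE x in lborel. x \<in> A \<longrightarrow> f x = g x"
  shows "(LINT x:A|lborel. f x) = (LINT x:A|lborel. g x)"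
  unfolding set_lebesgue_integral_def
proof (rule integral_cong_AE)
  show "(\<lambda>x. indicat_real A x *\<^sub>R f x) \<in> borel_measurable lborel" using assms(1) unfolding set_borel_measurable_def .
  show "(\<lambda>x. indicat_real A x *\<^sub>R g x) \<in> borel_measurable lborel" using assms(2) unfolding set_borel_measurable_def .
  show "AE x in lborel. indicat_real A x *\<^sub>R f x = indicat_real A x *\<^sub>R g x"
    using assms(3) by eventually_elim (auto simp: indicator_def)
qed

lemma H1_AE_replace:
  fixes u u' p :: "real \<Rightarrow> real"
  assumes u: "H1 a b u u'" and c: "continuous_on {a..b} p"
    and ae: "AE x in lborel. x \<in> {a..b} \<longrightarrow> u' x = p x"
  shows "H1 a b u p"
  unfolding H1_def
proof (intro conjI ballI)
  show "set_integrable lborel {a..b} p" by (rule borel_integrable_atLeastAtMost'[OF c])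
  show "set_integrable lborel {a..b} (\<lambda>s. (p s)\<^sup>2)"
    by (rule borel_integrable_atLeastAtMost') (intro continuous_intros c)
  fix x assume x: "x \<in> {a..b}"
  have sub: "{a..x} \<subseteq> {a..b}" using x by auto
  have "(LINT s:{a..x}|lborel. u' s) = (LINT s:{a..x}|lborel. p s)"
  proof (rule LINT_cong_AE)
    show "set_borel_measurable lborel {a..x} u'" by (rule set_integrable_bm[OF H1_int[OF u sub]])
    show "set_borel_measurable lborel {a..x} p"
      by (rule cont_bm) (rule continuous_on_subset[OF c sub])
    show "AE s in lborel. s \<in> {a..x} \<longrightarrow> u' s = p s"
      using ae by eventually_elim (use sub in auto)
  qed
  then show "u x = u a + (LBINT s=a..x. p s)"
    using H1_eq[OF u x] x by (simp add: interval_integral_Icc)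
qed

lemma H1_deriv:
  fixes u p :: "real \<Rightarrow> real"
  assumes u: "H1 a b u p" and c: "continuous_on {a..b} p" and x: "x \<in> {a..b}"
  shows "(u has_real_derivative p x) (at x within {a..b})"
proof -
  have ab: "a \<le> b" using x by auto
  have "((\<lambda>y. LBINT s=a..y. p s) has_vector_derivative p x) (at x within {a..b})"
    using interval_integral_FTC2[of a a b p x] ab c x by auto
  then have d: "((\<lambda>y. u a + (LBINT s=a..y. p s)) has_vector_derivative p x) (at x within {a..b})"
    by (auto intro!: derivative_eq_intros)
  have "(u has_vector_derivative p x) (at x within {a..b})"
  proof (rule has_vector_derivative_transform[OF x _ d])
    fix y assume "y \<in> {a..b}"
    then show "u y = u a + (LBINT s=a..y. p s)" using u unfolding H1_def by blast
  qed
  then show ?thesis by (simp add: has_real_derivative_iff_has_vector_derivative)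
qed



lemma LINT_const_Icc:
  fixes c :: real
  assumes "a \<le> b"
  shows "(LINT x:{a..b}|lborel. c) = c * (b - a)"
  using set_integral_const[of "{a..b}" lborel c] assms by simp

lemma regularity:
  assumes R: "R > 1" and hH: "H1 1 R h h'" and h1: "h 1 = 1" and hR: "h R = 1"
    and min: "\<forall>g g'. H1 1 R g g' \<and> g 1 = 1 \<and> g R = 1 \<longrightarrow> energy t R h h' \<le> energy t R g g'"
  shows "\<exists>c. AE r in lborel. r \<in> {1..R} \<longrightarrow> h' r * r\<^sup>2 = c + (LBINT s=1..r. 6 * h s + s\<^sup>2 * (fh t (h s) * h s))"
proof -
  define B where "B = (\<lambda>s. 6 * h s + s\<^sup>2 * (fh t (h s) * h s))"
  have ch: "continuous_on {1..R} h" by (rule H1_cont[OF hH])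
  have cB: "continuous_on {1..R} B" unfolding B_def fh_def by (intro continuous_intros ch)
  define G where "G = (\<lambda>x. LBINT s=1..x. B s)"
  have dG: "(G has_real_derivative B x) (at x within {1..R})" if "x \<in> {1..R}" for x
    using interval_integral_FTC2[of 1 1 R B x] cB that unfolding G_def
    by (simp add: has_real_derivative_iff_has_vector_derivative one_ereal_def)
  have HG: "H1 1 R G B" by (rule C1_H1) (use R cB dG in auto)
  have G1: "G 1 = 0" unfolding G_def by (simp add: one_ereal_def)
  have cG: "continuous_on {1..R} G" by (rule vderiv_cont[OF dG])
  have cr2: "continuous_on {1..R} (\<lambda>r::real. r\<^sup>2)" by (intro continuous_intros)
  have ih'r: "set_integrable lborel {1..R} (\<lambda>r. h' r * r\<^sup>2)"
    by (rule set_integrable_mult_cont[OF H1_int[OF hH] cr2]) simp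
  define A where "A = (\<lambda>r. h' r * r\<^sup>2 - G r)"
  have iA: "set_integrable lborel {1..R} A"
    unfolding A_def using ih'r borel_integrable_atLeastAtMost'[OF cG] by (rule set_integral_diff)
  have iA2: "set_integrable lborel {1..R} (\<lambda>r. (A r - c)\<^sup>2)" for c
  proof -
    have "set_integrable lborel {1..R} (\<lambda>r. (h' r)\<^sup>2 * r^4 + (h' r * (-2 * r\<^sup>2 * (G r + c)) + (G r + c)\<^sup>2))"
    proof (rule set_integral_add)
      show "set_integrable lborel {1..R} (\<lambda>r. (h' r)\<^sup>2 * r ^ 4)"
        by (rule set_integrable_mult_cont[OF H1_int2[OF hH]]) (auto intro: continuous_intros)
      show "set_integrable lborel {1..R} (\<lambda>r. h' r * (-2 * r\<^sup>2 * (G r + c)) + (G r + c)\<^sup>2)"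
        by (rule si_form[OF H1_int[OF hH]]) (auto intro!: continuous_intros cG)
    qed
    moreover have "(\<lambda>r. (h' r)\<^sup>2 * r^4 + (h' r * (-2 * r\<^sup>2 * (G r + c)) + (G r + c)\<^sup>2)) = (\<lambda>r. (A r - c)\<^sup>2)"
      unfolding A_def by (auto simp: power2_eq_square power4_eq_xxxx algebra_simps)
    ultimately show ?thesis by simp
  qed
  have claimD: "(LINT r:{1..R}|lborel. A r * \<phi>' r) = 0"
    if pH: "H1 1 R \<phi> \<phi>'" and p1: "\<phi> 1 = 0" and pR: "\<phi> R = 0" for \<phi> \<phi>'
  proof -
    have el: "(LINT r:{1..R}|lborel. h' r * \<phi>' r * r\<^sup>2 + B r * \<phi> r) = 0"
      using weak_EL[OF R hH h1 hR min pH p1 pR] unfolding B_def .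
    have Rin: "R \<in> {1..R}" using R by auto
    have pr: "(LINT r:{1..R}|lborel. B r * \<phi> r + G r * \<phi>' r) = 0"
      using H1_prod(2)[OF HG pH Rin] p1 pR G1 by simp
    have i1: "set_integrable lborel {1..R} (\<lambda>r. h' r * \<phi>' r * r\<^sup>2 + B r * \<phi> r)"
    proof -
      have "set_integrable lborel {1..R} (\<lambda>r. h' r * \<phi>' r)"
        by (rule set_integrable_L2[OF H1_int[OF hH] H1_int[OF pH] H1_int2[OF hH] H1_int2[OF pH]]) auto
      then show ?thesis by (rule si_form) (auto intro!: continuous_intros cB H1_cont[OF pH])
    qed
    have i2: "set_integrable lborel {1..R} (\<lambda>r. B r * \<phi> r + G r * \<phi>' r)"
      using H1_prod(1)[OF HG pH Rin] .
    have "(LINT r:{1..R}|lborel. A r * \<phi>' r)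
        = (LINT r:{1..R}|lborel. (h' r * \<phi>' r * r\<^sup>2 + B r * \<phi> r) - (B r * \<phi> r + G r * \<phi>' r))"
      unfolding A_def by (rule LINT_cong) (simp add: algebra_simps)
    also have "\<dots> = 0" using set_integral_diff(2)[OF i1 i2] el pr by simp
    finally show ?thesis .
  qed
  define c where "c = (LINT r:{1..R}|lborel. A r) / (R - 1)"
  define \<phi>0 where "\<phi>0 = (\<lambda>x::real. LBINT s=1..x. A s - c)"
  have iAc: "set_integrable lborel {1..R} (\<lambda>s. A s - c)"
    using iA borel_integrable_atLeastAtMost'[of 1 R "\<lambda>_. c"] by (intro set_integral_diff) auto
  have H0: "H1 1 R \<phi>0 (\<lambda>s. A s - c)"
    unfolding H1_def \<phi>0_def using iAc iA2[of c] by (simp add: one_ereal_def)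
  have p01: "\<phi>0 1 = 0" unfolding \<phi>0_def by (simp add: one_ereal_def)
  have LAc: "(LINT s:{1..R}|lborel. A s - c) = 0"
  proof -
    have "(LINT s:{1..R}|lborel. A s - c) = (LINT s:{1..R}|lborel. A s) - c * (R - 1)"
      using set_integral_diff(2)[OF iA borel_integrable_atLeastAtMost'[of 1 R "\<lambda>_. c"]] LINT_const_Icc[of 1 R c] R
      by simp
    then show ?thesis unfolding c_def using R by simp
  qed
  have p0R: "\<phi>0 R = 0" unfolding \<phi>0_def using LAc R by (simp add: interval_integral_Icc one_ereal_def)
  have D0: "(LINT r:{1..R}|lborel. A r * (A r - c)) = 0" by (rule claimD[OF H0 p01 p0R])
  have iAAc: "set_integrable lborel {1..R} (\<lambda>r. A r * (A r - c))"
  proof -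
    have "set_integrable lborel {1..R} (\<lambda>r. (A r - c)\<^sup>2 + c * (A r - c))"
      using iA2[of c] iAc by (intro set_integral_add) auto
    moreover have "(\<lambda>r. (A r - c)\<^sup>2 + c * (A r - c)) = (\<lambda>r. A r * (A r - c))"
      by (auto simp: power2_eq_square algebra_simps)
    ultimately show ?thesis by simp
  qed
  have sq0: "(LINT r:{1..R}|lborel. (A r - c)\<^sup>2) = 0"
  proof -
    have "(LINT r:{1..R}|lborel. (A r - c)\<^sup>2) = (LINT r:{1..R}|lborel. A r * (A r - c) - c * (A r - c))"
      by (rule LINT_cong) (simp add: power2_eq_square algebra_simps)
    also have "\<dots> = 0"
      using set_integral_diff(2)[OF iAAc set_integrable_mult_right[OF iAc, of c]] D0 LAc by simp
    finally show ?thesis .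
  qed
  have "AE r in lborel. indicator {1..R} r * (A r - c)\<^sup>2 = (0::real)"
  proof (subst integral_nonneg_eq_0_iff_AE[symmetric])
    show "integrable lborel (\<lambda>r. indicator {1..R} r * (A r - c)\<^sup>2)"
      using iA2[of c] unfolding set_integrable_def by simp
    show "AE r in lborel. 0 \<le> indicator {1..R} r * (A r - c)\<^sup>2" by simp
    show "integral\<^sup>L lborel (\<lambda>r. indicator {1..R} r * (A r - c)\<^sup>2) = 0"
      using sq0 unfolding set_lebesgue_integral_def by simp
  qed
  then have "AE r in lborel. r \<in> {1..R} \<longrightarrow> h' r * r\<^sup>2 = c + G r"
    by eventually_elim (auto simp: A_def indicator_def)
  then show ?thesis unfolding G_def B_def by blast
qed



lemma reg_facts:
  assumes R: "R > 1" and hH: "H1 1 R h h'" and h1: "h 1 = 1" and hR: "h R = 1"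
    and min: "\<forall>g g'. H1 1 R g g' \<and> g 1 = 1 \<and> g R = 1 \<longrightarrow> energy t R h h' \<le> energy t R g g'"
  obtains p z where "continuous_on {1..R} p" "continuous_on {1..R} z" "H1 1 R h p"
    "AE r in lborel. r \<in> {1..R} \<longrightarrow> h' r = p r"
    "\<And>x. x \<in> {1..R} \<Longrightarrow> (h has_real_derivative p x) (at x within {1..R})"
    "\<And>x. x \<in> {1..R} \<Longrightarrow> z x = p x * x\<^sup>2"
    "\<And>x. x \<in> {1..R} \<Longrightarrow> (z has_real_derivative (6 * h x + x\<^sup>2 * (fh t (h x) * h x))) (at x within {1..R})"
proof -
  obtain c where ae: "AE r in lborel. r \<in> {1..R} \<longrightarrow> h' r * r\<^sup>2 = c + (LBINT s=1..r. 6 * h s + s\<^sup>2 * (fh t (h s) * h s))"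
    using regularity[OF R hH h1 hR min] by blast
  define B where "B = (\<lambda>s. 6 * h s + s\<^sup>2 * (fh t (h s) * h s))"
  have ch: "continuous_on {1..R} h" by (rule H1_cont[OF hH])
  have cB: "continuous_on {1..R} B" unfolding B_def fh_def by (intro continuous_intros ch)
  define z where "z = (\<lambda>x::real. c + (LBINT s=1..x. B s))"
  have dz: "(z has_real_derivative B x) (at x within {1..R})" if "x \<in> {1..R}" for x
  proof -
    have "((\<lambda>x. LBINT s=1..x. B s) has_real_derivative B x) (at x within {1..R})"
      using interval_integral_FTC2[of 1 1 R B x] cB that
      by (simp add: has_real_derivative_iff_has_vector_derivative one_ereal_def)
    then show ?thesis unfolding z_def by (auto intro!: derivative_eq_intros)
  qed
  have cz: "continuous_on {1..R} z" by (rule vderiv_cont[OF dz])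
  define p where "p = (\<lambda>x::real. z x / x\<^sup>2)"
  have cp: "continuous_on {1..R} p" unfolding p_def by (intro continuous_intros cz) auto
  have aep: "AE r in lborel. r \<in> {1..R} \<longrightarrow> h' r = p r"
    using ae
  proof eventually_elim
    case (elim r)
    show ?case
    proof
      assume r: "r \<in> {1..R}"
      then have "r\<^sup>2 \<noteq> 0" by auto
      with elim r show "h' r = p r" unfolding p_def z_def B_def by (simp add: field_simps)
    qed
  qed
  have Hp: "H1 1 R h p" by (rule H1_AE_replace[OF hH cp aep])
  show ?thesis
  proof (rule that[OF cp cz Hp aep])
    fix x assume x: "x \<in> {1..R}"
    show "(h has_real_derivative p x) (at x within {1..R})" by (rule H1_deriv[OF Hp cp x])
    show "z x = p x * x\<^sup>2" unfolding p_def using x by auto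
    show "(z has_real_derivative 6 * h x + x\<^sup>2 * (fh t (h x) * h x)) (at x within {1..R})"
      using dz[OF x] unfolding B_def .
  qed
qed



lemma last_zero:
  fixes h :: "real \<Rightarrow> real"
  assumes c: "continuous_on {l..r0} h" and hl: "h l > 0" and hr: "h r0 < 0" and lr: "l \<le> r0"
  shows "\<exists>a. l < a \<and> a < r0 \<and> h a = 0 \<and> (\<forall>s. a < s \<and> s \<le> r0 \<longrightarrow> h s < 0)"
proof -
  define S where "S = {l..r0} \<inter> h -` {0}"
  have ne: "S \<noteq> {}"
  proof -
    obtain x where "l \<le> x" "x \<le> r0" "h x = 0" using IVT2'[of h r0 0 l] c hl hr lr by force
    then show ?thesis unfolding S_def by auto
  qed
  have cl: "closed S" unfolding S_def by (rule continuous_closed_preimage[OF c]) auto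
  have bdd: "bdd_above S" unfolding S_def by (rule bdd_aboveI[where M=r0]) auto
  define a where "a = Sup S"
  have aS: "a \<in> S" unfolding a_def using closed_contains_Sup[OF ne bdd cl] .
  then have a: "l \<le> a" "a \<le> r0" "h a = 0" unfolding S_def by auto
  have "a \<noteq> l" using a hl by auto
  moreover have "a \<noteq> r0" using a hr by auto
  moreover have "h s < 0" if s: "a < s" "s \<le> r0" for s
  proof (rule ccontr)
    assume "\<not> h s < 0"
    then have "h r0 \<le> 0" "0 \<le> h s" using hr by auto
    moreover have "continuous_on {s..r0} h" by (rule continuous_on_subset[OF c]) (use s a in auto)
    ultimately obtain x where x: "s \<le> x" "x \<le> r0" "h x = 0" using IVT2'[of h r0 0 s] s by force
    then have "x \<in> S" unfolding S_def using s a by auto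
    then have "x \<le> a" unfolding a_def by (rule cSup_upper[OF _ bdd])
    then show False using x s by auto
  qed
  ultimately show ?thesis using a by (intro exI[of _ a]) auto
qed

lemma first_zero:
  fixes h :: "real \<Rightarrow> real"
  assumes c: "continuous_on {r0..u} h" and hu: "h u > 0" and hr: "h r0 < 0" and lr: "r0 \<le> u"
  shows "\<exists>b. r0 < b \<and> b < u \<and> h b = 0 \<and> (\<forall>s. r0 \<le> s \<and> s < b \<longrightarrow> h s < 0)"
proof -
  define S where "S = {r0..u} \<inter> h -` {0}"
  have ne: "S \<noteq> {}"
  proof -
    obtain x where "r0 \<le> x" "x \<le> u" "h x = 0" using IVT'[of h r0 0 u] c hu hr lr by force
    then show ?thesis unfolding S_def by auto
  qed
  have cl: "closed S" unfolding S_def by (rule continuous_closed_preimage[OF c]) auto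
  have bdd: "bdd_below S" unfolding S_def by (rule bdd_belowI[where m=r0]) auto
  define b where "b = Inf S"
  have bS: "b \<in> S" unfolding b_def using closed_contains_Inf[OF ne bdd cl] .
  then have b: "r0 \<le> b" "b \<le> u" "h b = 0" unfolding S_def by auto
  have "b \<noteq> u" using b hu by auto
  moreover have "b \<noteq> r0" using b hr by auto
  moreover have "h s < 0" if s: "r0 \<le> s" "s < b" for s
  proof (rule ccontr)
    assume "\<not> h s < 0"
    then have "h r0 \<le> 0" "0 \<le> h s" using hr by auto
    moreover have "continuous_on {r0..s} h" by (rule continuous_on_subset[OF c]) (use s b in auto)
    ultimately obtain x where x: "r0 \<le> x" "x \<le> s" "h x = 0" using IVT'[of h r0 0 s] s by force
    then have "x \<in> S" unfolding S_def using s b by auto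
    then have "b \<le> x" unfolding b_def by (rule cInf_lower[OF _ bdd])
    then show False using x s by auto
  qed
  ultimately show ?thesis using b by (intro exI[of _ b]) auto
qed

lemma LINT_indicator_inter:
  fixes f :: "real \<Rightarrow> real"
  shows "(LINT s:A|lborel. indicator B s * f s) = (LINT s:(A \<inter> B)|lborel. f s)"
  unfolding set_lebesgue_integral_def by (simp add: indicator_inter_arith mult.assoc)

lemma energy_integrable:
  assumes R: "R > 1" and gH: "H1 1 R g g'"
  shows "set_integrable lborel {1..R} (\<lambda>r. ((1/2) * (g' r)\<^sup>2 + 3 / r\<^sup>2 * (g r)\<^sup>2 + t / 8 * (1 - (g r)\<^sup>2)\<^sup>2
       + hplus t / 8 * (1 + 3 * (g r)^4 - 4 * (g r)^3)) * r\<^sup>2)"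
proof -
  have ch: "continuous_on {1..R} g" by (rule H1_cont[OF gH])
  have nz: "\<forall>r\<in>{1..R}. r\<^sup>2 \<noteq> (0::real)" by auto
  have "set_integrable lborel {1..R} (\<lambda>r. (g' r)\<^sup>2 * (r\<^sup>2 / 2) + (3 / r\<^sup>2 * (g r)\<^sup>2 + t / 8 * (1 - (g r)\<^sup>2)\<^sup>2
       + hplus t / 8 * (1 + 3 * (g r)^4 - 4 * (g r)^3)) * r\<^sup>2)"
    by (rule si_form[OF H1_int2[OF gH]]) (use nz in \<open>auto intro!: continuous_intros ch\<close>)
  moreover have "(\<lambda>r. (g' r)\<^sup>2 * (r\<^sup>2 / 2) + (3 / r\<^sup>2 * (g r)\<^sup>2 + t / 8 * (1 - (g r)\<^sup>2)\<^sup>2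
       + hplus t / 8 * (1 + 3 * (g r)^4 - 4 * (g r)^3)) * r\<^sup>2) = (\<lambda>r. ((1/2) * (g' r)\<^sup>2 + 3 / r\<^sup>2 * (g r)\<^sup>2 + t / 8 * (1 - (g r)\<^sup>2)\<^sup>2
       + hplus t / 8 * (1 + 3 * (g r)^4 - 4 * (g r)^3)) * r\<^sup>2)"
    by (auto simp: algebra_simps)
  ultimately show ?thesis by simp
qed

lemma hplus_pos: "t \<ge> 0 \<Longrightarrow> hplus t > 0"
  proof -
  assume "t \<ge> 0"
  then have "sqrt (9 + 8 * t) \<ge> 0" by simp
  then have "3 + sqrt (9 + 8 * t) > 0" by linarith
  then show ?thesis unfolding hplus_def by simp
qed



lemma set_integrable_indicator_inter:
  fixes f :: "real \<Rightarrow> real"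
  shows "set_integrable lborel A (\<lambda>s. indicator B s * f s) \<longleftrightarrow> set_integrable lborel (A \<inter> B) f"
  unfolding set_integrable_def by (simp add: indicator_inter_arith mult.assoc)

lemma flip_H1:
  fixes h p :: "real \<Rightarrow> real"
  assumes Hp: "H1 1 R h p" and cp: "continuous_on {1..R} p" and ab: "1 < a" "a \<le> b" "b \<le> R"
    and ha: "h a = 0" and hb: "h b = 0"
  shows "H1 1 R (\<lambda>s. if s \<in> {a..b} then - h s else h s) (\<lambda>s. if s \<in> {a..b} then - p s else p s)"
  unfolding H1_def
proof (intro conjI ballI)
  have ip: "set_integrable lborel {1..R} p" by (rule borel_integrable_atLeastAtMost'[OF cp])
  have cpab: "continuous_on {a..b} p" by (rule continuous_on_subset[OF cp]) (use ab in auto)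
  have iind: "set_integrable lborel {1..R} (\<lambda>s. indicator {a..b} s * p s)"
  proof -
    have "{1..R} \<inter> {a..b} = {a..b}" using ab by auto
    then show ?thesis unfolding set_integrable_indicator_inter
      using borel_integrable_atLeastAtMost'[OF cpab] by metis
  qed
  have geq: "(\<lambda>s. if s \<in> {a..b} then - p s else p s) = (\<lambda>s. p s - 2 * (indicator {a..b} s * p s))"
    by (auto simp: indicator_def)
  show "set_integrable lborel {1..R} (\<lambda>s. if s \<in> {a..b} then - p s else p s)"
    unfolding geq using ip iind by (intro set_integral_diff) auto
  have "(\<lambda>s. ((if s \<in> {a..b} then - p s else p s))\<^sup>2) = (\<lambda>s. (p s)\<^sup>2)" by auto
  then show "set_integrable lborel {1..R} (\<lambda>s. (if s \<in> {a..b} then - p s else p s)\<^sup>2)"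
    using H1_int2[OF Hp, of 1 R] by simp
  fix x assume x: "x \<in> {1..R}"
  have sub: "{1..x} \<subseteq> {1..R}" using x by auto
  have ip1: "set_integrable lborel {1..x} p" by (rule set_integrable_subset[OF ip]) (use sub in auto)
  have iind1: "set_integrable lborel {1..x} (\<lambda>s. indicator {a..b} s * p s)"
    by (rule set_integrable_subset[OF iind]) (use sub in auto)
  have "(LINT s:{1..x}|lborel. (if s \<in> {a..b} then - p s else p s))
      = (LINT s:{1..x}|lborel. p s - 2 * (indicator {a..b} s * p s))" unfolding geq ..
  also have "\<dots> = (LINT s:{1..x}|lborel. p s) - 2 * (LINT s:({1..x} \<inter> {a..b})|lborel. p s)"
    using ip1 iind1 by (simp add: set_integral_diff LINT_indicator_inter)
  also have "\<dots> = (h x - h 1) - 2 * (if x < a then 0 else if x \<le> b then h x else 0)"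
  proof -
    have "(LINT s:{1..x}|lborel. p s) = h x - h 1" using H1_eq[OF Hp x] by simp
    moreover have "(LINT s:({1..x} \<inter> {a..b})|lborel. p s) = (if x < a then 0 else if x \<le> b then h x else 0)"
    proof (cases "x < a")
      case True
      then have "{1..x} \<inter> {a..b} = {}" by auto
      then show ?thesis using True by (simp add: set_lebesgue_integral_def)
    next
      case False
      show ?thesis
      proof (cases "x \<le> b")
        case True
        then have e: "{1..x} \<inter> {a..b} = {a..x}" using False ab by auto
        have "h x - h a = (LINT s:{a..x}|lborel. p s)"
          by (rule H1_diff[OF Hp]) (use x ab False True in auto)
        then show ?thesis unfolding e using False True ha by simp
      next
        case True': False
        then have e: "{1..x} \<inter> {a..b} = {a..b}" using ab by auto
        have "h b - h a = (LINT s:{a..b}|lborel. p s)"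
          by (rule H1_diff[OF Hp]) (use x ab in auto)
        then show ?thesis unfolding e using False True' ha hb by simp
      qed
    qed
    ultimately show ?thesis by simp
  qed
  finally have L: "(LINT s:{1..x}|lborel. (if s \<in> {a..b} then - p s else p s)) = (h x - h 1) - 2 * (if x < a then 0 else if x \<le> b then h x else 0)" .
  have "1 \<notin> {a..b}" using ab by auto
  then show "(if x \<in> {a..b} then - h x else h x) = (if 1 \<in> {a..b} then - h 1 else h 1) + (LBINT s=ereal 1..ereal x. (if s \<in> {a..b} then - p s else p s))"
    using L x by (auto simp: interval_integral_Icc one_ereal_def)
qed



lemma h_nonneg:
  assumes t: "t \<ge> 0" and R: "R > 1" and hH: "H1 1 R h h'" and h1: "h 1 = 1" and hR: "h R = 1"
    and min: "\<forall>g g'. H1 1 R g g' \<and> g 1 = 1 \<and> g R = 1 \<longrightarrow> energy t R h h' \<le> energy t R g g'"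
    and x: "x \<in> {1..R}"
  shows "h x \<ge> 0"
proof (rule ccontr)
  assume "\<not> h x \<ge> 0"
  then have hx: "h x < 0" by simp
  obtain p z where cp: "continuous_on {1..R} p" and Hp: "H1 1 R h p"
    and aep: "AE r in lborel. r \<in> {1..R} \<longrightarrow> h' r = p r"
    using reg_facts[OF R hH h1 hR min] by metis
  have ch: "continuous_on {1..R} h" by (rule H1_cont[OF hH])
  obtain a where a: "1 < a" "a < x" "h a = 0" "\<forall>s. a < s \<and> s \<le> x \<longrightarrow> h s < 0"
    using last_zero[of 1 x h] continuous_on_subset[OF ch, of "{1..x}"] x h1 hx by auto
  obtain b where b: "x < b" "b < R" "h b = 0" "\<forall>s. x \<le> s \<and> s < b \<longrightarrow> h s < 0"
    using first_zero[of x R h] continuous_on_subset[OF ch, of "{x..R}"] x hR hx by auto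
  have neg: "h s < 0" if "a < s" "s < b" for s
    using a(4) b(4) that by (cases "s \<le> x") auto
  define g where "g = (\<lambda>s. if s \<in> {a..b} then - h s else h s)"
  define g' where "g' = (\<lambda>s. if s \<in> {a..b} then - p s else p s)"
  have Hg: "H1 1 R g g'" unfolding g_def g'_def
    by (rule flip_H1[OF Hp cp]) (use a b in auto)
  have g1: "g 1 = 1" unfolding g_def using a h1 by auto
  have gR: "g R = 1" unfolding g_def using b hR by auto
  define hp where "hp = hplus t"
  have hp: "hp > 0" unfolding hp_def by (rule hplus_pos[OF t])
  define eh where "eh = (\<lambda>r. ((1/2) * (p r)\<^sup>2 + 3 / r\<^sup>2 * (h r)\<^sup>2 + t / 8 * (1 - (h r)\<^sup>2)\<^sup>2
       + hp / 8 * (1 + 3 * (h r)^4 - 4 * (h r)^3)) * r\<^sup>2)"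
  have ieh: "set_integrable lborel {1..R} eh" unfolding eh_def hp_def by (rule energy_integrable[OF R Hp])
  have cd: "continuous_on {a..b} (\<lambda>r. hp * (h r)^3 * r\<^sup>2)"
    by (intro continuous_intros continuous_on_subset[OF ch]) (use a b in auto)
  have iind: "set_integrable lborel {1..R} (\<lambda>r. indicator {a..b} r * (hp * (h r)^3 * r\<^sup>2))"
  proof -
    have "{1..R} \<inter> {a..b} = {a..b}" using a b by auto
    then show ?thesis unfolding set_integrable_indicator_inter
      using borel_integrable_atLeastAtMost'[OF cd] by metis
  qed
  have Eg: "energy t R g g' = energy t R h p + (LINT r:{a..b}|lborel. hp * (h r)^3 * r\<^sup>2)"
  proof -
    have "energy t R g g' = (LINT r:{1..R}|lborel. eh r + indicator {a..b} r * (hp * (h r)^3 * r\<^sup>2))"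
      unfolding energy_LINT[OF R]
    proof (rule LINT_cong)
      fix r :: real assume "r \<in> {1..R}"
      show "((1/2) * (g' r)\<^sup>2 + 3 / r\<^sup>2 * (g r)\<^sup>2 + t / 8 * (1 - (g r)\<^sup>2)\<^sup>2
         + hplus t / 8 * (1 + 3 * (g r)^4 - 4 * (g r)^3)) * r\<^sup>2
        = eh r + indicator {a..b} r * (hp * (h r)^3 * r\<^sup>2)"
        unfolding g_def g'_def eh_def hp_def by (cases "r \<in> {a..b}") (auto simp: algebra_simps indicator_def)
    qed
    also have "\<dots> = (LINT r:{1..R}|lborel. eh r) + (LINT r:{1..R}|lborel. indicator {a..b} r * (hp * (h r)^3 * r\<^sup>2))"
      using ieh iind by (rule set_integral_add)
    also have "(LINT r:{1..R}|lborel. indicator {a..b} r * (hp * (h r)^3 * r\<^sup>2)) = (LINT r:{a..b}|lborel. hp * (h r)^3 * r\<^sup>2)"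
    proof -
      have e: "{1..R} \<inter> {a..b} = {a..b}" using a b by auto
      show ?thesis by (simp only: LINT_indicator_inter e)
    qed
    also have "(LINT r:{1..R}|lborel. eh r) = energy t R h p"
      unfolding energy_LINT[OF R] eh_def hp_def ..
    finally show ?thesis .
  qed
  have Eh: "energy t R h h' = energy t R h p"
    unfolding energy_LINT[OF R]
  proof (rule LINT_cong_AE)
    show "set_borel_measurable lborel {1..R} (\<lambda>r. ((1/2) * (h' r)\<^sup>2 + 3 / r\<^sup>2 * (h r)\<^sup>2 + t / 8 * (1 - (h r)\<^sup>2)\<^sup>2
       + hplus t / 8 * (1 + 3 * (h r)^4 - 4 * (h r)^3)) * r\<^sup>2)"
      by (rule set_integrable_bm[OF energy_integrable[OF R hH]])
    show "set_borel_measurable lborel {1..R} (\<lambda>r. ((1/2) * (p r)\<^sup>2 + 3 / r\<^sup>2 * (h r)\<^sup>2 + t / 8 * (1 - (h r)\<^sup>2)\<^sup>2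
       + hplus t / 8 * (1 + 3 * (h r)^4 - 4 * (h r)^3)) * r\<^sup>2)"
      by (rule set_integrable_bm[OF energy_integrable[OF R Hp]])
    show "AE r in lborel. r \<in> {1..R} \<longrightarrow> ((1/2) * (h' r)\<^sup>2 + 3 / r\<^sup>2 * (h r)\<^sup>2 + t / 8 * (1 - (h r)\<^sup>2)\<^sup>2
       + hplus t / 8 * (1 + 3 * (h r)^4 - 4 * (h r)^3)) * r\<^sup>2 = ((1/2) * (p r)\<^sup>2 + 3 / r\<^sup>2 * (h r)\<^sup>2 + t / 8 * (1 - (h r)\<^sup>2)\<^sup>2
       + hplus t / 8 * (1 + 3 * (h r)^4 - 4 * (h r)^3)) * r\<^sup>2"
      using aep by eventually_elim auto
  qed
  have "(LINT r:{a..b}|lborel. hp * (h r)^3 * r\<^sup>2) < 0"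
  proof (rule neg_integral)
    show "a < b" using a b by auto
    show "continuous_on {a..b} (\<lambda>r. hp * (h r)^3 * r\<^sup>2)" by (rule cd)
    fix s assume "a < s" "s < b"
    then have "h s < 0" "s \<noteq> 0" using neg a by auto
    then show "hp * (h s)^3 * s\<^sup>2 < 0" using hp
      by (simp add: mult_pos_neg mult_neg_pos power_odd_eq)
  qed
  moreover have "energy t R h h' \<le> energy t R g g'" using min Hg g1 gR by blast
  ultimately show False using Eg Eh by simp
qed



lemma gron_ineq:
  fixes y w f x K R :: real
  assumes fK: "\<bar>f\<bar> \<le> K" and x1: "1 \<le> x" and xR: "x \<le> R"
  shows "2 * y * (w / x\<^sup>2) + 2 * w * (6 * y + x\<^sup>2 * (f * y)) \<le> (7 + R\<^sup>2 * K) * (y\<^sup>2 + w\<^sup>2)"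
proof -
  define M where "M = 1 / x\<^sup>2 + 6 + x\<^sup>2 * f"
  have x0: "x \<noteq> 0" using x1 by auto
  have x2: "1 \<le> x\<^sup>2" using x1 by (simp add: one_le_power)
  have "1 / x\<^sup>2 \<le> 1" using x2 by (simp add: divide_le_eq)
  moreover have "0 \<le> 1 / x\<^sup>2" by simp
  ultimately have a1: "\<bar>1 / x\<^sup>2\<bar> \<le> 1" by simp
  have K0: "0 \<le> K" using fK by linarith
  have "x\<^sup>2 \<le> R\<^sup>2" using x1 xR by (intro power_mono) auto
  then have a2: "\<bar>x\<^sup>2 * f\<bar> \<le> R\<^sup>2 * K" using fK K0 by (simp add: abs_mult mult_mono)
  have Mb: "\<bar>M\<bar> \<le> 7 + R\<^sup>2 * K" unfolding M_def using a1 a2 by linarith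
  have eq: "2 * y * (w / x\<^sup>2) + 2 * w * (6 * y + x\<^sup>2 * (f * y)) = (2 * y * w) * M"
    unfolding M_def using x0 by (simp add: field_simps)
  have "(2 * y * w) * M \<le> \<bar>2 * y * w\<bar> * \<bar>M\<bar>" by (metis abs_ge_self abs_mult)
  also have "\<dots> \<le> (y\<^sup>2 + w\<^sup>2) * (7 + R\<^sup>2 * K)"
  proof (rule mult_mono)
    show "\<bar>2 * y * w\<bar> \<le> y\<^sup>2 + w\<^sup>2" using two_abs_le[of y w] by (simp add: abs_mult)
  qed (use Mb in auto)
  finally show ?thesis using eq by (simp add: mult.commute)
qed

lemma h_pos:
  assumes t: "t \<ge> 0" and R: "R > 1" and hH: "H1 1 R h h'" and h1: "h 1 = 1" and hR: "h R = 1"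
    and min: "\<forall>g g'. H1 1 R g g' \<and> g 1 = 1 \<and> g R = 1 \<longrightarrow> energy t R h h' \<le> energy t R g g'"
    and x: "x \<in> {1..R}"
  shows "h x > 0"
proof (rule ccontr)
  assume "\<not> h x > 0"
  then have hx: "h x = 0" using h_nonneg[OF t R hH h1 hR min x] by simp
  obtain p z where cp: "continuous_on {1..R} p" and cz: "continuous_on {1..R} z"
    and Hp: "H1 1 R h p" and aep: "AE r in lborel. r \<in> {1..R} \<longrightarrow> h' r = p r"
    and dh: "\<And>x. x \<in> {1..R} \<Longrightarrow> (h has_real_derivative p x) (at x within {1..R})"
    and zeq: "\<And>x. x \<in> {1..R} \<Longrightarrow> z x = p x * x\<^sup>2"
    and dz: "\<And>x. x \<in> {1..R} \<Longrightarrow> (z has_real_derivative (6 * h x + x\<^sup>2 * (fh t (h x) * h x))) (at x within {1..R})"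
    by (rule reg_facts[OF R hH h1 hR min]) blast
  have ch: "continuous_on {1..R} h" by (rule H1_cont[OF hH])
  have x1: "1 < x" "x < R" using x hx h1 hR by (auto simp: order_le_less)
  have int: "\<And>y. 1 < y \<Longrightarrow> y < R \<Longrightarrow> at y within {1..R} = at y"
    by (rule at_within_interior) auto
  have "p x = 0"
  proof (rule DERIV_local_min)
    show "(h has_real_derivative p x) (at x)" using dh[of x] x int[OF x1] by simp
    show "0 < min (x - 1) (R - x)" using x1 by simp
    show "\<forall>y. \<bar>x - y\<bar> < min (x - 1) (R - x) \<longrightarrow> h x \<le> h y"
    proof (intro allI impI)
      fix y assume "\<bar>x - y\<bar> < min (x - 1) (R - x)"
      then have "y \<in> {1..R}" by auto
      then show "h x \<le> h y" using h_nonneg[OF t R hH h1 hR min] hx by simp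
    qed
  qed
  then have zx: "z x = 0" using zeq[OF x] by simp
  have cf: "continuous_on {1..R} (\<lambda>r. fh t (h r))" unfolding fh_def by (intro continuous_intros ch)
  obtain K where K: "K > 0" "\<forall>r\<in>{1..R}. \<bar>fh t (h r)\<bar> \<le> K" using cont_bound[OF cf] by blast
  define L where "L = 7 + R\<^sup>2 * K"
  define F where "F = (\<lambda>r. ((h r)\<^sup>2 + (z r)\<^sup>2) * exp (- L * r))"
  define D where "D = (\<lambda>r. (2 * h r * p r + 2 * z r * (6 * h r + r\<^sup>2 * (fh t (h r) * h r))) * exp (- L * r)
       + ((h r)\<^sup>2 + (z r)\<^sup>2) * (exp (- L * r) * (- L)))"
  have dF: "(F has_real_derivative D r) (at r within {1..R})" if r: "r \<in> {1..R}" for r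
  proof -
    have d1: "((\<lambda>r. (h r)\<^sup>2 + (z r)\<^sup>2) has_real_derivative
        (2 * h r * p r + 2 * z r * (6 * h r + r\<^sup>2 * (fh t (h r) * h r)))) (at r within {1..R})"
      by (rule DERIV_cong[OF DERIV_add[OF DERIV_power[OF dh[OF r], of 2] DERIV_power[OF dz[OF r], of 2]]]) (simp add: algebra_simps)
    have d2: "((\<lambda>r. exp (- L * r)) has_real_derivative (exp (- L * r) * (- L))) (at r within {1..R})"
      by (rule DERIV_cong[OF DERIV_chain2[OF DERIV_exp DERIV_cmult[OF DERIV_ident]]]) simp
    show ?thesis unfolding F_def D_def by (rule DERIV_cong[OF DERIV_mult[OF d1 d2]]) (simp add: algebra_simps)
  qed
  have Dneg: "D r \<le> 0" if r: "r \<in> {1..R}" for r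
  proof -
    have pr: "p r = z r / r\<^sup>2" using zeq[OF r] r by auto
    have "2 * h r * p r + 2 * z r * (6 * h r + r\<^sup>2 * (fh t (h r) * h r)) \<le> L * ((h r)\<^sup>2 + (z r)\<^sup>2)"
      unfolding pr L_def using gron_ineq[of "fh t (h r)" K r R "h r" "z r"] K r by auto
    then have "(2 * h r * p r + 2 * z r * (6 * h r + r\<^sup>2 * (fh t (h r) * h r))) * exp (- L * r)
        \<le> (L * ((h r)\<^sup>2 + (z r)\<^sup>2)) * exp (- L * r)" by (rule mult_right_mono) simp
    then show ?thesis unfolding D_def by (simp add: algebra_simps)
  qed
  have cF: "continuous_on {1..R} F" by (rule vderiv_cont[OF dF])
  have "F R \<le> F x"
  proof (rule DERIV_nonpos_imp_decreasing_open[of x R F])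
    show "x \<le> R" using x1 by simp
  next
    fix y assume y: "x < y" "y < R"
    then have "y \<in> {1..R}" "1 < y" using x1 by auto
    then show "\<exists>d. (F has_real_derivative d) (at y) \<and> d \<le> 0"
      using dF[of y] Dneg[of y] int[of y] y by auto
  next
    show "continuous_on {x..R} F" by (rule continuous_on_subset[OF cF]) (use x1 in auto)
  qed
  moreover have "F x = 0" unfolding F_def using hx zx by simp
  moreover have "F R > 0" unfolding F_def using hR by (simp add: add_pos_nonneg)
  ultimately show False by simp
qed



lemma final_alg:
  fixes V D H P r F al be ga :: real
  assumes "H \<noteq> 0" "r \<noteq> 0"
  shows "(al * D\<^sup>2 + be / r\<^sup>2 * V\<^sup>2 + al * (F + ga) * V\<^sup>2) * r\<^sup>2
    = (al * (D * inverse H + V * (- (P * inverse (H ^ Suc (Suc 0)))))\<^sup>2 * H\<^sup>2 + (be - 6 * al) / r\<^sup>2 * V\<^sup>2 + al * ga * V\<^sup>2) * r\<^sup>2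
      + al * ((D * V + V * D) * ((P * r\<^sup>2) / H) + V * V * (((6 * H + r\<^sup>2 * (F * H)) * H - (P * r\<^sup>2) * P) / (H * H)))"
  using assms by (simp add: field_simps power2_eq_square)

theorem lemma5p2:
  fixes t R \<alpha> \<beta> \<gamma> :: real and h h' v v' :: "real \<Rightarrow> real"
  assumes "t \<ge> 0" and "R > 1"
    and "H1 1 R h h'" and "h 1 = 1" and "h R = 1"
    and "\<forall>g g'. H1 1 R g g' \<and> g 1 = 1 \<and> g R = 1 \<longrightarrow> energy t R h h' \<le> energy t R g g'"
    and "H10 R v v'"
  shows "\<exists>q'. H1 1 R (\<lambda>r. v r / h r) q' \<and>
           phi t R h \<alpha> \<beta> \<gamma> v v' = (LBINT r=1..R.
              (\<alpha> * (q' r)\<^sup>2 * (h r)\<^sup>2 + (\<beta> - 6 * \<alpha>) / r\<^sup>2 * (v r)\<^sup>2 + \<alpha> * \<gamma> * (v r)\<^sup>2) * r\<^sup>2)"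
proof -
  note t = assms(1) and R = assms(2) and hH = assms(3) and h1 = assms(4) and hR = assms(5)
    and min = assms(6)
  have vH: "H1 1 R v v'" and v1: "v 1 = 0" and vR: "v R = 0" using assms(7) unfolding H10_def by auto
  obtain p z where cp: "continuous_on {1..R} p" and cz: "continuous_on {1..R} z"
    and Hp: "H1 1 R h p" and aep: "AE r in lborel. r \<in> {1..R} \<longrightarrow> h' r = p r"
    and dh: "\<And>x. x \<in> {1..R} \<Longrightarrow> (h has_real_derivative p x) (at x within {1..R})"
    and zeq: "\<And>x. x \<in> {1..R} \<Longrightarrow> z x = p x * x\<^sup>2"
    and dz: "\<And>x. x \<in> {1..R} \<Longrightarrow> (z has_real_derivative (6 * h x + x\<^sup>2 * (fh t (h x) * h x))) (at x within {1..R})"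
    by (rule reg_facts[OF R hH h1 hR min]) blast
  have hpos: "\<And>x. x \<in> {1..R} \<Longrightarrow> h x > 0" using h_pos[OF t R hH h1 hR min] by blast
  have hnz: "\<forall>x\<in>{1..R}. h x \<noteq> 0" using hpos by force
  have ch: "continuous_on {1..R} h" by (rule H1_cont[OF hH])
  have cv: "continuous_on {1..R} v" by (rule H1_cont[OF vH])
  define B where "B = (\<lambda>x. 6 * h x + x\<^sup>2 * (fh t (h x) * h x))"
  have cB: "continuous_on {1..R} B" unfolding B_def fh_def by (intro continuous_intros ch)
  define k' where "k' = (\<lambda>x. - (p x * inverse (h x ^ Suc (Suc 0))))"
  have kH: "H1 1 R (\<lambda>x. inverse (h x)) k'"
  proof (rule C1_H1)
    show "1 \<le> R" using R by simp
    show "continuous_on {1..R} k'" unfolding k'_def using hnz by (intro continuous_intros cp ch) auto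
    fix x assume x: "x \<in> {1..R}"
    show "((\<lambda>x. inverse (h x)) has_real_derivative k' x) (at x within {1..R})"
      unfolding k'_def by (rule DERIV_inverse_fun[OF dh[OF x]]) (use hnz x in auto)
  qed
  define q' where "q' = (\<lambda>s. v' s * inverse (h s) + v s * k' s)"
  have qH: "H1 1 R (\<lambda>r. v r / h r) q'"
  proof -
    have "H1 1 R (\<lambda>x. v x * inverse (h x)) q'" unfolding q'_def using H1_mult[OF vH kH] R by simp
    moreover have "(\<lambda>x. v x * inverse (h x)) = (\<lambda>r. v r / h r)" by (simp add: divide_inverse)
    ultimately show ?thesis by simp
  qed
  define w' where "w' = (\<lambda>x. (B x * h x - z x * p x) / (h x * h x))"
  have wH: "H1 1 R (\<lambda>x. z x / h x) w'"
  proof (rule C1_H1)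
    show "1 \<le> R" using R by simp
    show "continuous_on {1..R} w'" unfolding w'_def using hnz by (intro continuous_intros cp ch cz cB) auto
    fix x assume x: "x \<in> {1..R}"
    show "((\<lambda>x. z x / h x) has_real_derivative w' x) (at x within {1..R})"
      unfolding w'_def B_def by (rule DERIV_divide[OF dz[OF x] dh[OF x]]) (use hnz x in auto)
  qed
  have v2H: "H1 1 R (\<lambda>x. v x * v x) (\<lambda>s. v' s * v s + v s * v' s)" using H1_mult[OF vH vH] R by simp
  have Rin: "R \<in> {1..R}" using R by auto
  define D where "D = (\<lambda>s. (v' s * v s + v s * v' s) * (z s / h s) + v s * v s * w' s)"
  have iD: "set_integrable lborel {1..R} D" unfolding D_def using H1_prod(1)[OF v2H wH Rin] .
  have LD: "(LINT s:{1..R}|lborel. D s) = 0" unfolding D_def using H1_prod(2)[OF v2H wH Rin] v1 vR by simp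
  define I1 where "I1 = (\<lambda>r. (\<alpha> * (v' r)\<^sup>2 + \<beta> / r\<^sup>2 * (v r)\<^sup>2 + \<alpha> * (fh t (h r) + \<gamma>) * (v r)\<^sup>2) * r\<^sup>2)"
  have iI1: "set_integrable lborel {1..R} I1"
  proof -
    have nz: "\<forall>r\<in>{1..R}. r\<^sup>2 \<noteq> (0::real)" by auto
    have "set_integrable lborel {1..R} (\<lambda>r. (v' r)\<^sup>2 * (\<alpha> * r\<^sup>2) + (\<beta> / r\<^sup>2 * (v r)\<^sup>2 + \<alpha> * (fh t (h r) + \<gamma>) * (v r)\<^sup>2) * r\<^sup>2)"
      by (rule si_form[OF H1_int2[OF vH]]) (use nz in \<open>auto intro!: continuous_intros ch cv simp: fh_def\<close>)
    moreover have "(\<lambda>r. (v' r)\<^sup>2 * (\<alpha> * r\<^sup>2) + (\<beta> / r\<^sup>2 * (v r)\<^sup>2 + \<alpha> * (fh t (h r) + \<gamma>) * (v r)\<^sup>2) * r\<^sup>2) = I1"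
      unfolding I1_def by (auto simp: algebra_simps)
    ultimately show ?thesis by simp
  qed
  have phiL: "phi t R h \<alpha> \<beta> \<gamma> v v' = (LINT r:{1..R}|lborel. I1 r)"
    unfolding phi_def I1_def one_ereal_def by (rule interval_integral_Icc) (use R in simp)
  have "(LBINT r=1..R. (\<alpha> * (q' r)\<^sup>2 * (h r)\<^sup>2 + (\<beta> - 6 * \<alpha>) / r\<^sup>2 * (v r)\<^sup>2 + \<alpha> * \<gamma> * (v r)\<^sup>2) * r\<^sup>2)
      = (LINT r:{1..R}|lborel. (\<alpha> * (q' r)\<^sup>2 * (h r)\<^sup>2 + (\<beta> - 6 * \<alpha>) / r\<^sup>2 * (v r)\<^sup>2 + \<alpha> * \<gamma> * (v r)\<^sup>2) * r\<^sup>2)"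
    unfolding one_ereal_def by (rule interval_integral_Icc) (use R in simp)
  also have "\<dots> = (LINT r:{1..R}|lborel. I1 r - \<alpha> * D r)"
  proof (rule LINT_cong)
    fix r :: real assume r: "r \<in> {1..R}"
    then have hr: "h r \<noteq> 0" and r0: "r \<noteq> 0" using hnz by auto
    have zr: "z r = p r * r\<^sup>2" by (rule zeq[OF r])
    show "(\<alpha> * (q' r)\<^sup>2 * (h r)\<^sup>2 + (\<beta> - 6 * \<alpha>) / r\<^sup>2 * (v r)\<^sup>2 + \<alpha> * \<gamma> * (v r)\<^sup>2) * r\<^sup>2 = I1 r - \<alpha> * D r"
    proof -
      have fa: "I1 r = (\<alpha> * (q' r)\<^sup>2 * (h r)\<^sup>2 + (\<beta> - 6 * \<alpha>) / r\<^sup>2 * (v r)\<^sup>2 + \<alpha> * \<gamma> * (v r)\<^sup>2) * r\<^sup>2 + \<alpha> * D r"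
        unfolding I1_def D_def q'_def k'_def w'_def B_def zr by (rule final_alg[OF hr r0])
      then show ?thesis by linarith
    qed
  qed
  also have "\<dots> = (LINT r:{1..R}|lborel. I1 r) - \<alpha> * (LINT r:{1..R}|lborel. D r)"
    using set_integral_diff(2)[OF iI1 set_integrable_mult_right[OF iD, of \<alpha>]] by simp
  also have "\<dots> = phi t R h \<alpha> \<beta> \<gamma> v v'" using LD phiL by simp
  finally have E: "(LBINT r=1..R. (\<alpha> * (q' r)\<^sup>2 * (h r)\<^sup>2 + (\<beta> - 6 * \<alpha>) / r\<^sup>2 * (v r)\<^sup>2 + \<alpha> * \<gamma> * (v r)\<^sup>2) * r\<^sup>2) = phi t R h \<alpha> \<beta> \<gamma> v v'" .
  show ?thesis by (rule exI[of _ q'], rule conjI[OF qH]) (rule E[symmetric])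
qed


end
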